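(* Work in a second-order (Bayes linear) belief framework in which $P(\cdot)$ denotes a (primitive) prevision/expectation specified for all quantities below, with variances and covariances $\mathrm{Var}$, $\mathrm{Cov}$ derived from it. For vectors of random quantities $X$ and $W$, define the adjusted expectation of $X$ by $W$ as $$P_W(X)=P(X)+\mathrm{Cov}(X,W)\,\mathrm{Var}(W)^{\dagger}\,\big(W-P(W)\big),$$ where $\dagger$ denotes the Moore–Penrose generalised inverse. Let $m\ge 1$ and $n_1,\dots,n_m\ge 1$, and let $\boldsymbol Z=\{Z_{ij}: i=1,\dots,m,\ j=1,\dots,n_i\}$ be random vectors (all of the same dimension as $X$) such that $Z_{ij}=\mu_i+\mathcal R_{ij}$, where $\mu_1,\dots,\mu_m$ are random vectors, each $\mathcal R_{ij}$ has $P(\mathcal R_{ij})=0$ and is uncorrelated with every $\mu_k$, the residuals $\mathcal R_{ij}$ and $\mathcal R_{kl}$ are uncorrelated for $(i,j)\ne(k,l)$, and $\mathrm{Var}(\mathcal R_{ij})$ does not depend on $j$. Write $\boldsymbol\mu=\mathrm{vec}(\mu_1,\dots,\mu_m)$. Suppose the quantity of interest $X$ satisfies $$X=\sum_{i=1}^m A_i\mu_i+\boldsymbol U=\boldsymbol{\mathcal A}\boldsymbol\mu+\boldsymbol U,$$ where $\boldsymbol{\mathcal A}=(A_1,\dots,A_m)$ is a known (constant) matrix and $\boldsymbol U$ is a random vector uncorrelated with all elements of all $\mu_i$ and all $\mathcal R_{ij}$. Then $$P_{\boldsymbol Z}(X)=P_{P_{\boldsymbol Z}(\boldsymbol\mu)}(X)=\boldsymbol{\mathcal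 A}\,P_{\boldsymbol Z}(\boldsymbol\mu)+P(\boldsymbol U).$$
   Context: $P_{\boldsymbol Z}(\boldsymbol\mu)$ denotes the adjusted expectation of $\boldsymbol\mu$ by the full collection $\boldsymbol Z$ (stacked into one vector), and $P_{P_{\boldsymbol Z}(\boldsymbol\mu)}(X)$ denotes the adjusted expectation of $X$ by the random vector $P_{\boldsymbol Z}(\boldsymbol\mu)$. The structure $Z_{ij}=\mu_i+\mathcal R_{ij}$ encodes second-order exchangeability of the members within each class $i$ (with class mean $\mu_i$), and implies $\mathrm{Cov}(Z_{ij},Z_{kl})=\mathrm{Cov}(\mu_i,\mu_k)$ for $i\neq k$ and $\mathrm{Cov}(Z_{ij},Z_{il})=\mathrm{Var}(\mu_i)$ for $j\ne l$. *)

theory Defs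
  imports Complex_Main
begin

text \<open>Random quantities are real functions on an abstract sample space 's.\<close>

definition prevision :: "(('s \<Rightarrow> real) \<Rightarrow> real) \<Rightarrow> bool" where
  "prevision P \<longleftrightarrow>
     (\<forall>a X Y. P (\<lambda>s. a * X s + Y s) = a * P X + P Y) \<and>
     P (\<lambda>_. 1) = 1 \<and>
     (\<forall>X. P (\<lambda>s. X s * X s) \<ge> 0)"

definition cov :: "(('s \<Rightarrow> real) \<Rightarrow> real) \<Rightarrow> ('s \<Rightarrow> real) \<Rightarrow> ('s \<Rightarrow> real) \<Rightarrow> real" where
  "cov P X Y = P (\<lambda>s. X s * Y s) - P X * P Y"

definition mat_mult :: "'j set \<Rightarrow> ('j \<Rightarrow> 'j \<Rightarrow> real) \<Rightarrow> ('j \<Rightarrow> 'j \<Rightarrow> real) \<Rightarrow> 'j \<Rightarrow> 'j \<Rightarrow> real" where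
  "mat_mult J A B = (\<lambda>i k. \<Sum>j\<in>J. A i j * B j k)"

text \<open>The four Penrose conditions (on J x J), with G vanishing outside J x J.\<close>

definition is_mp_inverse :: "'j set \<Rightarrow> ('j \<Rightarrow> 'j \<Rightarrow> real) \<Rightarrow> ('j \<Rightarrow> 'j \<Rightarrow> real) \<Rightarrow> bool" where
  "is_mp_inverse J M G \<longleftrightarrow>
     (\<forall>i\<in>J. \<forall>k\<in>J. mat_mult J (mat_mult J M G) M i k = M i k) \<and>
     (\<forall>i\<in>J. \<forall>k\<in>J. mat_mult J (mat_mult J G M) G i k = G i k) \<and>
     (\<forall>i\<in>J. \<forall>k\<in>J. mat_mult J M G i k = mat_mult J M G k i) \<and>
     (\<forall>i\<in>J. \<forall>k\<in>J. mat_mult J G M i k = mat_mult J G M k i) \<and>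
     (\<forall>i k. i \<notin> J \<or> k \<notin> J \<longrightarrow> G i k = 0)"

definition mp_inv :: "'j set \<Rightarrow> ('j \<Rightarrow> 'j \<Rightarrow> real) \<Rightarrow> 'j \<Rightarrow> 'j \<Rightarrow> real" where
  "mp_inv J M = (THE G. is_mp_inverse J M G)"

definition adj_exp ::
  "(('s \<Rightarrow> real) \<Rightarrow> real) \<Rightarrow> ('i \<Rightarrow> 's \<Rightarrow> real) \<Rightarrow> 'j set \<Rightarrow> ('j \<Rightarrow> 's \<Rightarrow> real)
     \<Rightarrow> 'i \<Rightarrow> 's \<Rightarrow> real" where
  "adj_exp P X J W =
     (let G = mp_inv J (\<lambda>j k. cov P (W j) (W k))
      in (\<lambda>i s. P (X i) + (\<Sum>j\<in>J. \<Sum>k\<in>J. cov P (X i) (W j) * G j k * (W k s - P (W k)))))"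

end

theory Submission
  imports Defs
begin


lemma P_zero: assumes "prevision P" shows "P (\<lambda>_. 0) = 0"
proof -
  have H: "\<forall>a X Y. P (\<lambda>s. a * X s + Y s) = a * P X + P Y" using assms unfolding prevision_def by blast
  show ?thesis using H[rule_format, of 1 "\<lambda>_. 0" "\<lambda>_. 0"] by simp
qed

lemma P_lin: assumes "prevision P" shows "P (\<lambda>s. a * X s + Y s) = a * P X + P Y"
  using assms unfolding prevision_def by blast

lemma P_add: assumes "prevision P" shows "P (\<lambda>s. X s + Y s) = P X + P Y"
  using P_lin[OF assms, of 1 X Y] by simp

lemma P_scale: assumes "prevision P" shows "P (\<lambda>s. a * X s) = a * P X"
  using P_lin[OF assms, of a X "\<lambda>_. 0"] P_zero[OF assms] by simp

lemma P_const: assumes "prevision P" shows "P (\<lambda>s. c) = c"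
proof -
  have "P (\<lambda>s. c * (\<lambda>_. 1) s + (\<lambda>_. 0) s) = c * P (\<lambda>_. 1) + P (\<lambda>_. 0)"
    by (rule P_lin[OF assms])
  then show ?thesis using assms P_zero[OF assms] unfolding prevision_def by simp
qed

lemma P_sum: assumes "prevision P"
  shows "P (\<lambda>s. \<Sum>i\<in>I. f i s) = (\<Sum>i\<in>I. P (f i))"
proof (cases "finite I")
  case True then show ?thesis
  proof (induction I rule: finite_induct)
    case empty then show ?case using P_zero[OF assms] by simp
  next
    case (insert x F)
    then show ?case using P_add[OF assms, of "f x" "\<lambda>s. \<Sum>i\<in>F. f i s"] by simp
  qed
next
  case False then show ?thesis using P_zero[OF assms] by simp
qed

lemma P_diff: assumes "prevision P" shows "P (\<lambda>s. X s - Y s) = P X - P Y"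
  using P_lin[OF assms, of "-1" Y X] by simp

lemma cov_sym: "cov P X Y = cov P Y X"
  unfolding cov_def by (simp add: mult.commute)

lemma cov_lin_left: assumes "prevision P"
  shows "cov P (\<lambda>s. a * X s + Y s) Z = a * cov P X Z + cov P Y Z"
proof -
  have "P (\<lambda>s. (a * X s + Y s) * Z s) = P (\<lambda>s. a * (X s * Z s) + Y s * Z s)"
    by (simp add: algebra_simps)
  also have "\<dots> = a * P (\<lambda>s. X s * Z s) + P (\<lambda>s. Y s * Z s)"
    by (rule P_lin[OF assms])
  finally show ?thesis unfolding cov_def P_lin[OF assms] by (simp add: algebra_simps)
qed

lemma cov_add_left: assumes "prevision P"
  shows "cov P (\<lambda>s. X s + Y s) Z = cov P X Z + cov P Y Z"
  using cov_lin_left[OF assms, of 1 X Y Z] by simp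

lemma cov_zero_left: assumes "prevision P" shows "cov P (\<lambda>_. 0) Z = 0"
  unfolding cov_def using P_zero[OF assms] by simp

lemma cov_const_left: assumes "prevision P" shows "cov P (\<lambda>_. c) Z = 0"
  unfolding cov_def using P_scale[OF assms, of c Z] P_const[OF assms] by simp

lemma cov_scale_left: assumes "prevision P"
  shows "cov P (\<lambda>s. a * X s) Z = a * cov P X Z"
  using cov_lin_left[OF assms, of a X "\<lambda>_. 0" Z] cov_zero_left[OF assms] by simp

lemma cov_diff_left: assumes "prevision P"
  shows "cov P (\<lambda>s. X s - Y s) Z = cov P X Z - cov P Y Z"
  using cov_lin_left[OF assms, of "-1" Y X Z] by simp

lemma cov_shift_left: assumes "prevision P"
  shows "cov P (\<lambda>s. X s + c) Z = cov P X Z"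
  using cov_add_left[OF assms, of X "\<lambda>_. c" Z] cov_const_left[OF assms] by simp

lemma cov_sum_left: assumes "prevision P"
  shows "cov P (\<lambda>s. \<Sum>i\<in>I. f i s) Z = (\<Sum>i\<in>I. cov P (f i) Z)"
proof (cases "finite I")
  case True then show ?thesis
  proof (induction I rule: finite_induct)
    case empty then show ?case using cov_zero_left[OF assms] by simp
  next
    case (insert x F)
    then show ?case using cov_add_left[OF assms, of "f x" "\<lambda>s. \<Sum>i\<in>F. f i s"] by simp
  qed
next
  case False then show ?thesis using cov_zero_left[OF assms] by simp
qed

lemma cov_lincomb_left: assumes "prevision P"
  shows "cov P (\<lambda>s. \<Sum>i\<in>I. a i * f i s) Z = (\<Sum>i\<in>I. a i * cov P (f i) Z)"
  using cov_sum_left[OF assms, of "\<lambda>i s. a i * f i s" I Z] cov_scale_left[OF assms] by simp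

lemma cov_lincomb_right: assumes "prevision P"
  shows "cov P Z (\<lambda>s. \<Sum>i\<in>I. a i * f i s) = (\<Sum>i\<in>I. a i * cov P Z (f i))"
  using cov_lincomb_left[OF assms, of a f I Z] cov_sym[of P Z "\<lambda>s. \<Sum>i\<in>I. a i * f i s"]
    cov_sym[of P Z] by simp

lemma cov_centered_right: assumes "prevision P"
  shows "cov P Z (\<lambda>s. \<Sum>i\<in>I. a i * (f i s - c i)) = (\<Sum>i\<in>I. a i * cov P Z (f i))"
proof -
  have e: "(\<lambda>s. \<Sum>i\<in>I. a i * (f i s - c i)) = (\<lambda>s. (\<Sum>i\<in>I. a i * f i s) + (- (\<Sum>i\<in>I. a i * c i)))"
    by (simp add: algebra_simps sum_subtractf)
  have "cov P Z (\<lambda>s. (\<Sum>i\<in>I. a i * f i s) + (- (\<Sum>i\<in>I. a i * c i))) = cov P Z (\<lambda>s. (\<Sum>i\<in>I. a i * f i s))"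
    using cov_shift_left[OF assms, of "\<lambda>s. \<Sum>i\<in>I. a i * f i s" "- (\<Sum>i\<in>I. a i * c i)" Z]
      cov_sym[of P Z "\<lambda>s. \<Sum>i\<in>I. a i * f i s"] cov_sym[of P Z "\<lambda>s. (\<Sum>i\<in>I. a i * f i s) + (- (\<Sum>i\<in>I. a i * c i))"]
    by simp
  then show ?thesis unfolding e using cov_lincomb_right[OF assms, of Z a f I] by simp
qed

lemma var_nonneg: assumes "prevision P" shows "cov P X X \<ge> 0"
proof -
  have H: "\<forall>X. P (\<lambda>s. X s * X s) \<ge> 0" using assms unfolding prevision_def by blast
  have "P (\<lambda>s. (X s - P X) * (X s - P X)) \<ge> 0" using H[rule_format, of "\<lambda>s. X s - P X"] by simp
  moreover have "(\<lambda>s. (X s - P X) * (X s - P X)) = (\<lambda>s. 1 * (X s * X s) + ((-2 * P X) * X s + P X * P X))"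
    by (simp add: algebra_simps)
  moreover have "P (\<lambda>s. 1 * (X s * X s) + ((-2 * P X) * X s + P X * P X)) = 1 * P (\<lambda>s. X s * X s) + P (\<lambda>s. (-2 * P X) * X s + P X * P X)"
    by (rule P_lin[OF assms])
  moreover have "P (\<lambda>s. (-2 * P X) * X s + P X * P X) = (-2 * P X) * P X + P (\<lambda>s. P X * P X)"
    by (rule P_lin[OF assms])
  ultimately have "0 \<le> P (\<lambda>s. X s * X s) + (-2 * P X) * P X + P X * P X"
    using P_const[OF assms] by simp
  then show ?thesis unfolding cov_def by simp
qed

lemma cs_zero: assumes "prevision P" and "cov P T T = 0" shows "cov P Y T = 0"
proof (rule ccontr)
  assume ne: "cov P Y T \<noteq> 0"
  define c where "c = cov P Y T"
  define v where "v = cov P Y Y"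
  have v0: "v \<ge> 0" unfolding v_def by (rule var_nonneg[OF assms(1)])
  define t where "t = - c / (v + 1)"
  have tv: "t * (v + 1) = - c" unfolding t_def using v0 by simp
  have c1: "cov P Y (\<lambda>s. t * Y s + T s) = t * v + c"
    using cov_lin_left[OF assms(1), of t Y T Y] cov_sym[of P Y "\<lambda>s. t * Y s + T s"] cov_sym[of P T Y]
    unfolding c_def v_def by simp
  have c2: "cov P T (\<lambda>s. t * Y s + T s) = t * c"
    using cov_lin_left[OF assms(1), of t Y T T] assms(2) cov_sym[of P T "\<lambda>s. t * Y s + T s"] cov_sym[of P T Y]
    unfolding c_def by simp
  have q: "cov P (\<lambda>s. t * Y s + T s) (\<lambda>s. t * Y s + T s) = t * (t * v + c) + t * c"
    using cov_lin_left[OF assms(1), of t Y T "\<lambda>s. t * Y s + T s"] c1 c2 by simp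
  have tv2: "t * v = - c - t" using tv by (simp add: algebra_simps)
  have "t * (t * v + c) + t * c = t * (t * v) + 2 * t * c" by (simp add: algebra_simps)
  also have "\<dots> = t * (- c - t) + 2 * t * c" by (simp only: tv2)
  also have "\<dots> = t * c - t * t" by (simp add: algebra_simps)
  finally have "t * (t * v + c) + t * c = t * c - t * t" .
  moreover have "t * c < 0"
  proof -
    have "t * c = - (c * c) / (v + 1)" unfolding t_def by simp
    moreover have "c \<noteq> 0" using ne c_def by simp
    then have "c * c > 0" using not_real_square_gt_zero by blast
    ultimately show ?thesis using v0 by (simp add: divide_pos_pos)
  qed
  moreover have "t * t \<ge> 0" by simp
  ultimately have "cov P (\<lambda>s. t * Y s + T s) (\<lambda>s. t * Y s + T s) < 0" using q by linarith
  then show False using var_nonneg[OF assms(1)] by (simp add: not_le[symmetric])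
qed



definition rJ :: "'j set \<Rightarrow> ('j \<Rightarrow> 'j \<Rightarrow> real) \<Rightarrow> 'j \<Rightarrow> 'j \<Rightarrow> real" where
  "rJ J A = (\<lambda>i k. if i \<in> J \<and> k \<in> J then A i k else 0)"

definition tr :: "('j \<Rightarrow> 'j \<Rightarrow> real) \<Rightarrow> 'j \<Rightarrow> 'j \<Rightarrow> real" where
  "tr A = (\<lambda>i k. A k i)"

lemma rJ_eq_iff: "rJ J A = rJ J B \<longleftrightarrow> (\<forall>i\<in>J. \<forall>k\<in>J. A i k = B i k)"
  unfolding rJ_def by (auto simp: fun_eq_iff)

lemma rJ_eqD: "rJ J A = rJ J B \<Longrightarrow> i \<in> J \<Longrightarrow> k \<in> J \<Longrightarrow> A i k = B i k"
  using rJ_eq_iff by metis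

lemma mm_assoc: "mat_mult J (mat_mult J A B) C = mat_mult J A (mat_mult J B C)"
  unfolding mat_mult_def
  by (auto simp: fun_eq_iff sum_distrib_left sum_distrib_right mult.assoc intro: sum.swap)

lemma mm_cong_l: "rJ J A = rJ J A' \<Longrightarrow> rJ J (mat_mult J A B) = rJ J (mat_mult J A' B)"
  unfolding rJ_eq_iff mat_mult_def by simp

lemma mm_cong_r: "rJ J B = rJ J B' \<Longrightarrow> rJ J (mat_mult J A B) = rJ J (mat_mult J A B')"
  unfolding rJ_eq_iff mat_mult_def by simp

lemma tr_mm: "tr (mat_mult J A B) = mat_mult J (tr B) (tr A)"
  unfolding tr_def mat_mult_def by (simp add: fun_eq_iff mult.commute)

lemma tr_tr[simp]: "tr (tr A) = A" unfolding tr_def by simp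

lemma rJ_tr: "rJ J A = rJ J B \<Longrightarrow> rJ J (tr A) = rJ J (tr B)"
  unfolding rJ_eq_iff tr_def by simp

lemma mp_conds:
  assumes "is_mp_inverse J M G"
  shows "rJ J (mat_mult J (mat_mult J M G) M) = rJ J M"
    and "rJ J (mat_mult J (mat_mult J G M) G) = rJ J G"
    and "rJ J (tr (mat_mult J M G)) = rJ J (mat_mult J M G)"
    and "rJ J (tr (mat_mult J G M)) = rJ J (mat_mult J G M)"
    and "\<And>i k. i \<notin> J \<or> k \<notin> J \<Longrightarrow> G i k = 0"
  using assms unfolding is_mp_inverse_def rJ_eq_iff tr_def by auto

lemma mp_unique_half:
  assumes M: "tr M = M" and g1: "is_mp_inverse J M G1" and g2: "is_mp_inverse J M G2"
  shows "rJ J G1 = rJ J (mat_mult J (mat_mult J G1 M) G2)"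
proof -
  note a = mp_conds[OF g1] and b = mp_conds[OF g2]
  let ?m = "mat_mult J"
  have "rJ J G1 = rJ J (?m (?m G1 M) G1)" using a(2) by simp
  also have "\<dots> = rJ J (?m G1 (?m M G1))" by (simp add: mm_assoc)
  also have "\<dots> = rJ J (?m G1 (tr (?m M G1)))" by (rule mm_cong_r) (use a(3) in simp)
  also have "\<dots> = rJ J (?m G1 (?m (tr G1) M))" by (simp add: tr_mm M)
  also have "\<dots> = rJ J (?m G1 (?m (tr G1) (tr (?m (?m M G2) M))))"
  proof -
    have "rJ J (tr (?m (?m M G2) M)) = rJ J M" using rJ_tr[OF b(1)] M by simp
    then show ?thesis by (intro mm_cong_r) simp
  qed
  also have "\<dots> = rJ J (?m G1 (?m (tr G1) (?m (tr M) (tr (?m M G2)))))"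
    by (simp add: tr_mm)
  also have "\<dots> = rJ J (?m G1 (?m (?m (tr G1) (tr M)) (tr (?m M G2))))"
    by (simp add: mm_assoc)
  also have "\<dots> = rJ J (?m G1 (?m (tr (?m M G1)) (tr (?m M G2))))"
    by (simp add: tr_mm)
  also have "\<dots> = rJ J (?m G1 (?m (?m M G1) (tr (?m M G2))))"
    by (intro mm_cong_r mm_cong_l a(3))
  also have "\<dots> = rJ J (?m G1 (?m (?m M G1) (?m M G2)))"
    by (intro mm_cong_r b(3))
  also have "\<dots> = rJ J (?m (?m (?m G1 M) G1) (?m M G2))"
    by (simp add: mm_assoc)
  also have "\<dots> = rJ J (?m G1 (?m M G2))"
    by (intro mm_cong_l a(2))
  finally show ?thesis by (simp add: mm_assoc)
qed

lemma mp_unique: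
  assumes M: "tr M = M" and g1: "is_mp_inverse J M G1" and g2: "is_mp_inverse J M G2"
  shows "G1 = G2"
proof -
  note a = mp_conds[OF g1] and b = mp_conds[OF g2]
  let ?m = "mat_mult J"
  have h1: "rJ J G1 = rJ J (?m (?m G1 M) G2)" by (rule mp_unique_half[OF M g1 g2])
  have "rJ J G2 = rJ J (?m (?m G2 M) G2)" using b(2) by simp
  also have "\<dots> = rJ J (?m (tr (?m G2 M)) G2)" by (intro mm_cong_l) (use b(4) in simp)
  also have "\<dots> = rJ J (?m (?m M (tr G2)) G2)" by (simp add: tr_mm M)
  also have "\<dots> = rJ J (?m (?m (tr (?m M (?m G1 M))) (tr G2)) G2)"
  proof -
    have "rJ J (tr (?m M (?m G1 M))) = rJ J M" using rJ_tr[OF a(1)] M by (simp add: mm_assoc)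
    then show ?thesis by (intro mm_cong_l) simp
  qed
  also have "\<dots> = rJ J (?m (?m (?m (tr (?m G1 M)) (tr M)) (tr G2)) G2)"
    by (simp add: tr_mm)
  also have "\<dots> = rJ J (?m (?m (tr (?m G1 M)) (?m (tr M) (tr G2))) G2)"
    by (simp add: mm_assoc)
  also have "\<dots> = rJ J (?m (?m (tr (?m G1 M)) (tr (?m G2 M))) G2)"
    by (simp add: tr_mm)
  also have "\<dots> = rJ J (?m (?m (?m G1 M) (tr (?m G2 M))) G2)"
    by (intro mm_cong_l a(4))
  also have "\<dots> = rJ J (?m (?m (?m G1 M) (?m G2 M)) G2)"
    by (intro mm_cong_l mm_cong_r b(4))
  also have "\<dots> = rJ J (?m (?m G1 M) (?m (?m G2 M) G2))"
    by (simp add: mm_assoc)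
  also have "\<dots> = rJ J (?m (?m G1 M) G2)"
    by (intro mm_cong_r b(2))
  finally have h2: "rJ J G2 = rJ J (?m (?m G1 M) G2)" .
  have "rJ J G1 = rJ J G2" using h1 h2 by simp
  then show ?thesis using a(5) b(5) unfolding rJ_eq_iff by (auto simp: fun_eq_iff) metis
qed

lemma sum_swap_mult: "(\<Sum>j\<in>J. (a j::real) * (\<Sum>l\<in>L. b j l * c l)) = (\<Sum>l\<in>L. (\<Sum>j\<in>J. a j * b j l) * c l)"
proof -
  have "(\<Sum>j\<in>J. a j * (\<Sum>l\<in>L. b j l * c l)) = (\<Sum>j\<in>J. \<Sum>l\<in>L. a j * b j l * c l)"
    by (simp add: sum_distrib_left mult.assoc)
  also have "\<dots> = (\<Sum>l\<in>L. \<Sum>j\<in>J. a j * b j l * c l)" by (rule sum.swap)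
  also have "\<dots> = (\<Sum>l\<in>L. (\<Sum>j\<in>J. a j * b j l) * c l)" by (simp add: sum_distrib_right)
  finally show ?thesis .
qed

lemma sum_swap_mult3: "(\<Sum>j\<in>J. (\<Sum>l\<in>L. b j l * c l) * (a j::real)) = (\<Sum>l\<in>L. c l * (\<Sum>j\<in>J. b j l * a j))"
proof -
  have "(\<Sum>j\<in>J. (\<Sum>l\<in>L. b j l * c l) * a j) = (\<Sum>j\<in>J. \<Sum>l\<in>L. c l * (b j l * a j))"
    by (rule sum.cong[OF refl]) (simp add: sum_distrib_right sum_distrib_left mult_ac)
  also have "\<dots> = (\<Sum>l\<in>L. \<Sum>j\<in>J. c l * (b j l * a j))" by (rule sum.swap)
  also have "\<dots> = (\<Sum>l\<in>L. c l * (\<Sum>j\<in>J. b j l * a j))" by (simp add: sum_distrib_left)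
  finally show ?thesis .
qed

lemma mm_diff_right: "mat_mult J A (\<lambda>i k. B i k - C i k) = (\<lambda>i k. mat_mult J A B i k - mat_mult J A C i k)"
  unfolding mat_mult_def by (simp add: fun_eq_iff right_diff_distrib sum_subtractf)

lemma proj_exists:
  assumes fin: "finite J" and V: "tr V = V" and K: "K \<subseteq> J"
  shows "\<exists>\<Pi> A. tr \<Pi> = \<Pi> \<and> rJ J (mat_mult J \<Pi> \<Pi>) = rJ J \<Pi> \<and>
            (\<forall>i\<in>J. \<forall>k\<in>K. mat_mult J \<Pi> V i k = V i k) \<and> rJ J \<Pi> = rJ J (mat_mult J V A)"
proof -
  have finK: "finite K" using finite_subset[OF K fin] .
  have Vs: "\<And>i k. V i k = V k i" using V unfolding tr_def by (metis)
  show ?thesis using finK K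
  proof (induction K rule: finite_subset_induct)
    case empty
    show ?case
      by (rule exI[of _ "\<lambda>_ _. 0"], rule exI[of _ "\<lambda>_ _. 0"]) (simp add: tr_def mat_mult_def)
  next
    case (insert a F)
    then obtain \<Pi> A where Ps: "tr \<Pi> = \<Pi>" and Pid: "rJ J (mat_mult J \<Pi> \<Pi>) = rJ J \<Pi>"
      and PV: "\<forall>i\<in>J. \<forall>k\<in>F. mat_mult J \<Pi> V i k = V i k" and PA: "rJ J \<Pi> = rJ J (mat_mult J V A)"
      by blast
    have aJ: "a \<in> J" using insert by simp
    have Psym: "\<And>i k. \<Pi> i k = \<Pi> k i" using Ps unfolding tr_def by metis
    have idem: "\<And>i k. i \<in> J \<Longrightarrow> k \<in> J \<Longrightarrow> (\<Sum>j\<in>J. \<Pi> i j * \<Pi> j k) = \<Pi> i k"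
      using rJ_eqD[OF Pid] unfolding mat_mult_def by simp
    have PVk: "\<And>i k. i \<in> J \<Longrightarrow> k \<in> F \<Longrightarrow> (\<Sum>j\<in>J. \<Pi> i j * V j k) = V i k"
      using PV unfolding mat_mult_def by simp
    have PAik: "\<And>i k. i \<in> J \<Longrightarrow> k \<in> J \<Longrightarrow> \<Pi> i k = (\<Sum>l\<in>J. V i l * A l k)"
      using rJ_eqD[OF PA] unfolding mat_mult_def by simp
    define v where "v = (\<lambda>i. V i a)"
    define pv where "pv = (\<lambda>i. \<Sum>j\<in>J. \<Pi> i j * v j)"
    define w where "w = (\<lambda>i. v i - pv i)"
    define c where "c = (\<Sum>j\<in>J. w j * w j)"
    have F1: "(\<Sum>j\<in>J. \<Pi> i j * pv j) = pv i" if "i \<in> J" for i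
    proof -
      have "(\<Sum>j\<in>J. \<Pi> i j * pv j) = (\<Sum>l\<in>J. (\<Sum>j\<in>J. \<Pi> i j * \<Pi> j l) * v l)"
        unfolding pv_def by (rule sum_swap_mult)
      also have "\<dots> = pv i" unfolding pv_def using idem[OF that] by simp
      finally show ?thesis .
    qed
    have F2: "(\<Sum>j\<in>J. \<Pi> i j * w j) = 0" if "i \<in> J" for i
      unfolding w_def using F1[OF that] by (simp add: right_diff_distrib sum_subtractf pv_def)
    have F2': "(\<Sum>j\<in>J. w j * \<Pi> j k) = 0" if "k \<in> J" for k
      using F2[OF that] by (simp add: Psym[of _ k] mult.commute)
    show ?case
    proof (cases "c = 0")
      case True
      have w0: "w j = 0" if "j \<in> J" for j
      proof -
        have "\<forall>j\<in>J. w j * w j = 0" using True fin unfolding c_def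
          by (subst (asm) sum_nonneg_eq_0_iff) auto
        then show ?thesis using that by simp
      qed
      show ?thesis
      proof (intro exI conjI)
        show "tr \<Pi> = \<Pi>" by (rule Ps)
        show "rJ J (mat_mult J \<Pi> \<Pi>) = rJ J \<Pi>" by (rule Pid)
        show "rJ J \<Pi> = rJ J (mat_mult J V A)" by (rule PA)
        show "\<forall>i\<in>J. \<forall>k\<in>insert a F. mat_mult J \<Pi> V i k = V i k"
        proof (intro ballI)
          fix i k assume i: "i \<in> J" and k: "k \<in> insert a F"
          show "mat_mult J \<Pi> V i k = V i k"
          proof (cases "k = a")
            case True
            have "v i = pv i" using w0[OF i] unfolding w_def by simp
            then show ?thesis using True unfolding mat_mult_def pv_def v_def by simp
          next
            case False
            then show ?thesis using k PVk[OF i] unfolding mat_mult_def by simp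
          qed
        qed
      qed
    next
      case False
      define \<Pi>' where "\<Pi>' = (\<lambda>i k. \<Pi> i k + w i * w k / c)"
      define al where "al = (\<lambda>l. (if l = a then 1 else 0) - (\<Sum>j\<in>J. A l j * v j))"
      define A' where "A' = (\<lambda>l k. A l k + al l * w k / c)"
      have wV: "(\<Sum>j\<in>J. w j * V j k) = 0" if k: "k \<in> F" for k
      proof -
        have "(\<Sum>j\<in>J. pv j * V j k) = (\<Sum>l\<in>J. v l * (\<Sum>j\<in>J. \<Pi> l j * V j k))"
          unfolding pv_def sum_swap_mult3 using Psym by simp
        also have "\<dots> = (\<Sum>l\<in>J. v l * V l k)" using PVk k by simp
        finally have "(\<Sum>j\<in>J. pv j * V j k) = (\<Sum>l\<in>J. v l * V l k)" .
        then show ?thesis unfolding w_def by (simp add: left_diff_distrib sum_subtractf)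
      qed
      have wpv: "(\<Sum>j\<in>J. w j * pv j) = 0"
      proof -
        have "(\<Sum>j\<in>J. w j * pv j) = (\<Sum>l\<in>J. (\<Sum>j\<in>J. w j * \<Pi> j l) * v l)"
          unfolding pv_def by (rule sum_swap_mult)
        then show ?thesis using F2' by simp
      qed
      have wv: "(\<Sum>j\<in>J. w j * v j) = c"
      proof -
        have "(\<Sum>j\<in>J. w j * v j) = (\<Sum>j\<in>J. w j * w j + w j * pv j)"
          unfolding w_def by (simp add: algebra_simps)
        then show ?thesis using wpv unfolding c_def by (simp add: sum.distrib)
      qed
      show ?thesis
      proof (intro exI conjI)
        show "tr \<Pi>' = \<Pi>'" unfolding tr_def \<Pi>'_def by (simp add: fun_eq_iff Psym mult.commute)
        show "rJ J (mat_mult J \<Pi>' \<Pi>') = rJ J \<Pi>'"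
        proof (unfold rJ_eq_iff, intro ballI)
          fix i k assume i: "i \<in> J" and k: "k \<in> J"
          have "\<And>j. \<Pi>' i j * \<Pi>' j k = \<Pi> i j * \<Pi> j k + (w i / c) * (w j * \<Pi> j k)
              + (w k / c) * (\<Pi> i j * w j) + (w i * w k / c / c) * (w j * w j)"
            unfolding \<Pi>'_def using False by (simp add: field_simps)
          then have "mat_mult J \<Pi>' \<Pi>' i k = (\<Sum>j\<in>J. \<Pi> i j * \<Pi> j k) + (w i / c) * (\<Sum>j\<in>J. w j * \<Pi> j k)
              + (w k / c) * (\<Sum>j\<in>J. \<Pi> i j * w j) + (w i * w k / c / c) * (\<Sum>j\<in>J. w j * w j)"
            unfolding mat_mult_def by (simp add: sum.distrib sum_distrib_left)
          also have "\<dots> = \<Pi>' i k"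
            using idem[OF i k] F2[OF i] F2'[OF k] False unfolding \<Pi>'_def c_def[symmetric] by simp
          finally show "mat_mult J \<Pi>' \<Pi>' i k = \<Pi>' i k" .
        qed
        show "\<forall>i\<in>J. \<forall>k\<in>insert a F. mat_mult J \<Pi>' V i k = V i k"
        proof (intro ballI)
          fix i k assume i: "i \<in> J" and k: "k \<in> insert a F"
          have exp: "mat_mult J \<Pi>' V i k = (\<Sum>j\<in>J. \<Pi> i j * V j k) + (w i / c) * (\<Sum>j\<in>J. w j * V j k)"
          proof -
            have "\<And>j. \<Pi>' i j * V j k = \<Pi> i j * V j k + (w i / c) * (w j * V j k)"
              unfolding \<Pi>'_def by (simp add: algebra_simps)
            then show ?thesis unfolding mat_mult_def by (simp add: sum.distrib sum_distrib_left)
          qed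
          show "mat_mult J \<Pi>' V i k = V i k"
          proof (cases "k = a")
            case True
            have "mat_mult J \<Pi>' V i k = pv i + w i" unfolding exp using True wv False
              unfolding pv_def v_def by simp
            then show ?thesis using True unfolding w_def v_def by simp
          next
            case False
            then have "k \<in> F" using k by simp
            then show ?thesis unfolding exp using wV PVk[OF i] by simp
          qed
        qed
        show "rJ J \<Pi>' = rJ J (mat_mult J V A')"
        proof (unfold rJ_eq_iff, intro ballI)
          fix i k assume i: "i \<in> J" and k: "k \<in> J"
          have Val: "(\<Sum>l\<in>J. V i l * al l) = w i"
          proof -
            have "(\<Sum>l\<in>J. V i l * al l) = (\<Sum>l\<in>J. V i l * (if l = a then 1 else 0)) - (\<Sum>l\<in>J. V i l * (\<Sum>j\<in>J. A l j * v j))"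
              unfolding al_def by (simp add: right_diff_distrib sum_subtractf)
            also have "(\<Sum>l\<in>J. V i l * (if l = a then 1 else 0)) = v i"
              using aJ fin unfolding v_def by (simp add: if_distrib[of "\<lambda>x. V i _ * x"] sum.delta' cong: if_cong)
            also have "(\<Sum>l\<in>J. V i l * (\<Sum>j\<in>J. A l j * v j)) = (\<Sum>j\<in>J. (\<Sum>l\<in>J. V i l * A l j) * v j)"
              by (rule sum_swap_mult)
            also have "\<dots> = pv i" unfolding pv_def using PAik[OF i] by simp
            finally show ?thesis unfolding w_def .
          qed
          have "mat_mult J V A' i k = (\<Sum>l\<in>J. V i l * A l k) + (\<Sum>l\<in>J. V i l * al l) * w k / c"
            unfolding mat_mult_def A'_def
            by (simp add: distrib_left sum.distrib sum_distrib_right mult.assoc sum_divide_distrib[symmetric])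
          then show "\<Pi>' i k = mat_mult J V A' i k" unfolding \<Pi>'_def using Val PAik[OF i k] by simp
        qed
      qed
    qed
  qed
qed

lemma mp_exists:
  assumes fin: "finite J" and V: "tr V = V"
  shows "\<exists>G. is_mp_inverse J V G"
proof -
  obtain \<Pi> A where Ps: "tr \<Pi> = \<Pi>" and Pid: "rJ J (mat_mult J \<Pi> \<Pi>) = rJ J \<Pi>"
    and PV0: "\<forall>i\<in>J. \<forall>k\<in>J. mat_mult J \<Pi> V i k = V i k" and PA: "rJ J \<Pi> = rJ J (mat_mult J V A)"
    using proj_exists[OF fin V order_refl] by blast
  let ?m = "mat_mult J"
  have Vs: "\<And>i k. V i k = V k i" using V unfolding tr_def by metis
  have Psym: "\<And>i k. \<Pi> i k = \<Pi> k i" using Ps unfolding tr_def by metis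
  have PV: "rJ J (?m \<Pi> V) = rJ J V" using PV0 unfolding rJ_eq_iff by simp
  define G where "G = (\<lambda>i k. if i \<in> J \<and> k \<in> J then ?m (?m \<Pi> A) \<Pi> i k else 0)"
  have G0: "rJ J G = rJ J (?m (?m \<Pi> A) \<Pi>)" unfolding rJ_eq_iff G_def by simp
  have VP: "rJ J (?m V \<Pi>) = rJ J V"
  proof -
    have "?m V \<Pi> = tr (?m \<Pi> V)" using V Ps by (simp add: tr_mm)
    then show ?thesis using rJ_tr[OF PV] V by simp
  qed
  have VG: "rJ J (?m V G) = rJ J \<Pi>"
  proof -
    have "rJ J (?m V G) = rJ J (?m V (?m (?m \<Pi> A) \<Pi>))" by (rule mm_cong_r[OF G0])
    also have "\<dots> = rJ J (?m (?m (?m V \<Pi>) A) \<Pi>)" by (simp add: mm_assoc)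
    also have "\<dots> = rJ J (?m (?m V A) \<Pi>)" by (intro mm_cong_l VP)
    also have "\<dots> = rJ J (?m \<Pi> \<Pi>)" by (intro mm_cong_l PA[symmetric])
    finally show ?thesis using Pid by simp
  qed
  have c1: "rJ J (?m (?m V G) V) = rJ J V" using mm_cong_l[OF VG] PV by simp
  have PG: "rJ J (?m \<Pi> G) = rJ J G"
  proof -
    have "rJ J (?m \<Pi> G) = rJ J (?m \<Pi> (?m (?m \<Pi> A) \<Pi>))" by (rule mm_cong_r[OF G0])
    also have "\<dots> = rJ J (?m (?m \<Pi> \<Pi>) (?m A \<Pi>))" by (simp add: mm_assoc)
    also have "\<dots> = rJ J (?m \<Pi> (?m A \<Pi>))" by (intro mm_cong_l Pid)
    finally show ?thesis using G0 by (simp add: mm_assoc)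
  qed
  have GV: "rJ J (?m G V) = rJ J \<Pi>"
  proof -
    define Y where "Y = (\<lambda>i k. ?m G V i k - \<Pi> i k)"
    have PY: "rJ J (?m \<Pi> Y) = rJ J Y"
    proof -
      have "?m \<Pi> Y = (\<lambda>i k. ?m (?m \<Pi> G) V i k - ?m \<Pi> \<Pi> i k)"
        unfolding Y_def mm_diff_right by (simp add: mm_assoc)
      moreover have "rJ J (?m (?m \<Pi> G) V) = rJ J (?m G V)" by (intro mm_cong_l PG)
      ultimately show ?thesis using Pid unfolding rJ_eq_iff Y_def by simp
    qed
    have VY: "\<And>i k. i \<in> J \<Longrightarrow> k \<in> J \<Longrightarrow> ?m V Y i k = 0"
    proof -
      fix i k assume i: "i \<in> J" and k: "k \<in> J"
      have "?m V Y = (\<lambda>i k. ?m (?m V G) V i k - ?m V \<Pi> i k)"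
        unfolding Y_def mm_diff_right by (simp add: mm_assoc)
      then show "?m V Y i k = 0" using rJ_eqD[OF c1 i k] rJ_eqD[OF VP i k] by simp
    qed
    have Y0: "Y i k = 0" if i: "i \<in> J" and k: "k \<in> J" for i k
    proof -
      have Yexp: "Y i' k = ?m V (?m A Y) i' k" if i': "i' \<in> J" for i'
      proof -
        have "Y i' k = ?m \<Pi> Y i' k" using rJ_eqD[OF PY i' k] by simp
        also have "\<dots> = ?m (?m V A) Y i' k" using rJ_eqD[OF mm_cong_l[OF PA, of Y] i' k] .
        finally show ?thesis by (simp add: mm_assoc)
      qed
      have "(\<Sum>i'\<in>J. Y i' k * Y i' k) = (\<Sum>i'\<in>J. (\<Sum>l\<in>J. V i' l * ?m A Y l k) * Y i' k)"
        using Yexp unfolding mat_mult_def[of J V] by (intro sum.cong) auto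
      also have "\<dots> = (\<Sum>l\<in>J. ?m A Y l k * (\<Sum>i'\<in>J. V i' l * Y i' k))" by (rule sum_swap_mult3)
      also have "\<dots> = 0" using VY[OF _ k] unfolding mat_mult_def[of J V] by (simp add: Vs[of _ "_::'a"])
      finally have "(\<Sum>i'\<in>J. Y i' k * Y i' k) = 0" .
      then have "\<forall>i'\<in>J. Y i' k * Y i' k = 0" using fin by (subst (asm) sum_nonneg_eq_0_iff) auto
      then show ?thesis using i by simp
    qed
    show ?thesis unfolding rJ_eq_iff using Y0 unfolding Y_def by simp
  qed
  have c2: "rJ J (?m (?m G V) G) = rJ J G" using mm_cong_l[OF GV] PG by simp
  show ?thesis
  proof (intro exI)
    show "is_mp_inverse J V G" unfolding is_mp_inverse_def
    proof (intro conjI ballI allI impI)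
      fix i k assume i: "i \<in> J" and k: "k \<in> J"
      show "?m (?m V G) V i k = V i k" using rJ_eqD[OF c1 i k] .
      show "?m (?m G V) G i k = G i k" using rJ_eqD[OF c2 i k] .
      show "?m V G i k = ?m V G k i" using rJ_eqD[OF VG i k] rJ_eqD[OF VG k i] Psym by simp
      show "?m G V i k = ?m G V k i" using rJ_eqD[OF GV i k] rJ_eqD[OF GV k i] Psym by simp
    next
      fix i k :: 'a assume "i \<notin> J \<or> k \<notin> J"
      then show "G i k = 0" unfolding G_def by auto
    qed
  qed
qed

lemma mp_inv_is:
  assumes "finite J" and "tr V = V"
  shows "is_mp_inverse J V (mp_inv J V)"
proof -
  obtain G where G: "is_mp_inverse J V G" using mp_exists[OF assms] by blast
  show ?thesis unfolding mp_inv_def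
    by (rule theI[of _ G]) (use G mp_unique[OF assms(2)] in auto)
qed

lemma mp_inv_c1:
  assumes "finite J" and "\<And>i k. V i k = V k i" and "i \<in> J" and "k \<in> J"
  shows "mat_mult J (mat_mult J V (mp_inv J V)) V i k = V i k"
proof -
  have "tr V = V" using assms(2) unfolding tr_def by (simp add: fun_eq_iff)
  then show ?thesis using mp_inv_is[OF assms(1)] assms(3,4) unfolding is_mp_inverse_def by blast
qed



definition Lf :: "(('s \<Rightarrow> real) \<Rightarrow> real) \<Rightarrow> 'j set \<Rightarrow> ('j \<Rightarrow> 's \<Rightarrow> real) \<Rightarrow> ('j \<Rightarrow> 'j \<Rightarrow> real) \<Rightarrow> ('s \<Rightarrow> real) \<Rightarrow> 's \<Rightarrow> real" where
  "Lf P J W G Y = (\<lambda>s. \<Sum>j\<in>J. \<Sum>k\<in>J. cov P Y (W j) * G j k * (W k s - P (W k)))"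

lemma adj_Lf: "adj_exp P X J W = (\<lambda>i s. P (X i) + Lf P J W (mp_inv J (\<lambda>j k. cov P (W j) (W k))) (X i) s)"
  unfolding adj_exp_def Lf_def Let_def by simp

lemma Lf_alt: "Lf P J W G Y = (\<lambda>s. \<Sum>k\<in>J. (\<Sum>j\<in>J. cov P Y (W j) * G j k) * (W k s - P (W k)))"
  unfolding Lf_def by (rule ext, subst sum.swap) (simp add: sum_distrib_right)

lemma Lf_P: assumes "prevision P" shows "P (Lf P J W G Y) = 0"
proof -
  have "P (Lf P J W G Y) = (\<Sum>k\<in>J. P (\<lambda>s. (\<Sum>j\<in>J. cov P Y (W j) * G j k) * (W k s - P (W k))))"
    unfolding Lf_alt by (rule P_sum[OF assms])
  also have "\<dots> = 0"
    by (simp add: P_scale[OF assms, of _ "\<lambda>s. W _ s - P (W _)"] P_diff[OF assms] P_const[OF assms])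
  finally show ?thesis .
qed

lemma Lf_cov: assumes "prevision P"
  shows "cov P Z (Lf P J W G Y) = (\<Sum>k\<in>J. (\<Sum>j\<in>J. cov P Y (W j) * G j k) * cov P Z (W k))"
  unfolding Lf_alt by (rule cov_centered_right[OF assms])

lemma Lf_cong: "(\<And>j. j \<in> J \<Longrightarrow> cov P Y (W j) = cov P Y' (W j)) \<Longrightarrow> Lf P J W G Y = Lf P J W G Y'"
  unfolding Lf_def by simp

lemma Lf_zero: "(\<And>j. j \<in> J \<Longrightarrow> cov P Y (W j) = 0) \<Longrightarrow> Lf P J W G Y = (\<lambda>s. 0)"
  unfolding Lf_def by simp

lemma Lf_lin: assumes "prevision P"
  shows "Lf P J W G (\<lambda>s. \<Sum>b\<in>B. \<beta> b * Y b s) = (\<lambda>s. \<Sum>b\<in>B. \<beta> b * Lf P J W G (Y b) s)"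
proof
  fix s
  have "Lf P J W G (\<lambda>s. \<Sum>b\<in>B. \<beta> b * Y b s) s =
      (\<Sum>j\<in>J. \<Sum>k\<in>J. \<Sum>b\<in>B. \<beta> b * (cov P (Y b) (W j) * G j k * (W k s - P (W k))))"
    unfolding Lf_def cov_lincomb_left[OF assms] by (intro sum.cong refl) (simp add: sum_distrib_right mult.assoc)
  also have "\<dots> = (\<Sum>j\<in>J. \<Sum>b\<in>B. \<Sum>k\<in>J. \<beta> b * (cov P (Y b) (W j) * G j k * (W k s - P (W k))))"
    by (rule sum.cong[OF refl]) (rule sum.swap)
  also have "\<dots> = (\<Sum>b\<in>B. \<Sum>j\<in>J. \<Sum>k\<in>J. \<beta> b * (cov P (Y b) (W j) * G j k * (W k s - P (W k))))"
    by (rule sum.swap)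
  also have "\<dots> = (\<Sum>b\<in>B. \<beta> b * Lf P J W G (Y b) s)"
    unfolding Lf_def by (simp add: sum_distrib_left)
  finally show "Lf P J W G (\<lambda>s. \<Sum>b\<in>B. \<beta> b * Y b s) s = (\<Sum>b\<in>B. \<beta> b * Lf P J W G (Y b) s)" .
qed

lemma sum_swap_mult4: "(\<Sum>k\<in>K. (\<Sum>j\<in>J. c j * g j k) * (v k::real)) = (\<Sum>j\<in>J. c j * (\<Sum>k\<in>K. g j k * v k))"
proof -
  have "(\<Sum>k\<in>K. (\<Sum>j\<in>J. c j * g j k) * v k) = (\<Sum>k\<in>K. \<Sum>j\<in>J. c j * (g j k * v k))"
    by (rule sum.cong[OF refl]) (simp add: sum_distrib_right sum_distrib_left mult_ac)
  also have "\<dots> = (\<Sum>j\<in>J. \<Sum>k\<in>K. c j * (g j k * v k))" by (rule sum.swap)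
  also have "\<dots> = (\<Sum>j\<in>J. c j * (\<Sum>k\<in>K. g j k * v k))" by (simp add: sum_distrib_left)
  finally show ?thesis .
qed

lemma Lf_orth:
  assumes prev: "prevision P" and fin: "finite J"
    and c1: "\<And>i k. i \<in> J \<Longrightarrow> k \<in> J \<Longrightarrow>
       mat_mult J (mat_mult J (\<lambda>j k. cov P (W j) (W k)) G) (\<lambda>j k. cov P (W j) (W k)) i k = cov P (W i) (W k)"
    and l: "l \<in> J"
  shows "cov P (Lf P J W G Y) (W l) = cov P Y (W l)"
proof -
  define V where "V = (\<lambda>j k. cov P (W j) (W k))"
  have Vs: "\<And>i k. V i k = V k i" unfolding V_def by (rule cov_sym)
  define GV where "GV = mat_mult J G V"
  define T where "T = (\<lambda>s. W l s - (\<Sum>k\<in>J. GV k l * W k s))"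
  have covT: "cov P T Z = cov P (W l) Z - (\<Sum>k\<in>J. GV k l * cov P (W k) Z)" for Z
    unfolding T_def cov_diff_left[OF prev] cov_lincomb_left[OF prev] ..
  have TW: "cov P T (W m) = 0" if m: "m \<in> J" for m
  proof -
    have "(\<Sum>k\<in>J. GV k l * cov P (W k) (W m)) = (\<Sum>k\<in>J. V m k * GV k l)"
      unfolding V_def by (simp add: cov_sym[of P _ "W m"] mult.commute)
    also have "\<dots> = mat_mult J (mat_mult J V G) V m l"
      unfolding mm_assoc GV_def by (simp add: mat_mult_def)
    also have "\<dots> = V m l" using c1[OF m l] unfolding V_def .
    finally show ?thesis unfolding covT V_def by (simp add: cov_sym)
  qed
  have TW': "cov P (W k) T = 0" if "k \<in> J" for k
    using TW[OF that] cov_sym[of P "W k" T] by simp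
  have TT: "cov P T T = 0"
    using covT[of T] TW' l by simp
  have "cov P Y T = 0" by (rule cs_zero[OF prev TT])
  moreover have "cov P Y T = cov P T Y" by (rule cov_sym)
  moreover have sy: "cov P (W k) Y = cov P Y (W k)" for k by (rule cov_sym)
  ultimately have e: "cov P Y (W l) = (\<Sum>k\<in>J. GV k l * cov P Y (W k))"
    using covT[of Y] by (simp add: sy)
  have sy2: "cov P (Lf P J W G Y) (W l) = cov P (W l) (Lf P J W G Y)" by (rule cov_sym)
  have "cov P (Lf P J W G Y) (W l) = (\<Sum>k\<in>J. (\<Sum>j\<in>J. cov P Y (W j) * G j k) * V l k)"
    unfolding V_def sy2 by (rule Lf_cov[OF prev])
  also have "\<dots> = (\<Sum>j\<in>J. cov P Y (W j) * (\<Sum>k\<in>J. G j k * V l k))"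
    by (rule sum_swap_mult4)
  also have "\<dots> = (\<Sum>j\<in>J. GV j l * cov P Y (W j))"
    unfolding GV_def mat_mult_def by (simp add: Vs[of l] mult.commute)
  finally show ?thesis using e by simp
qed

lemma Lf_cov2:
  assumes prev: "prevision P" and fin: "finite J"
    and c1: "\<And>i k. i \<in> J \<Longrightarrow> k \<in> J \<Longrightarrow>
       mat_mult J (mat_mult J (\<lambda>j k. cov P (W j) (W k)) G) (\<lambda>j k. cov P (W j) (W k)) i k = cov P (W i) (W k)"
  shows "cov P Z (Lf P J W G Y) = cov P (Lf P J W G Z) (Lf P J W G Y)"
  unfolding Lf_cov[OF prev] using Lf_orth[OF prev fin c1, of _ Z] by simp



lemma cov_shift_left2: assumes "prevision P" shows "cov P (\<lambda>s. c + X s) Z = cov P X Z"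
proof -
  have "(\<lambda>s. c + X s) = (\<lambda>s. X s + c)" by (simp add: add.commute)
  then show ?thesis using cov_shift_left[OF assms] by simp
qed

lemma cov_shift_right2: assumes "prevision P" shows "cov P Z (\<lambda>s. c + X s) = cov P Z X"
  using cov_shift_left2[OF assms, of c X Z] cov_sym[of P Z] by metis

lemma triple: "(\<Sum>a\<in>M. \<Sum>b\<in>M. (\<Sum>b'\<in>M. x b' * k b' a) * h a b * (l b::real)) =
    (\<Sum>b'\<in>M. x b' * (\<Sum>b\<in>M. (\<Sum>a\<in>M. k b' a * h a b) * l b))"
proof -
  have "(\<Sum>a\<in>M. \<Sum>b\<in>M. (\<Sum>b'\<in>M. x b' * k b' a) * h a b * l b) =
        (\<Sum>a\<in>M. \<Sum>b\<in>M. \<Sum>b'\<in>M. x b' * (k b' a * h a b * l b))"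
    by (intro sum.cong refl) (simp add: sum_distrib_right sum_distrib_left mult_ac)
  also have "\<dots> = (\<Sum>a\<in>M. \<Sum>b'\<in>M. \<Sum>b\<in>M. x b' * (k b' a * h a b * l b))"
    by (rule sum.cong[OF refl]) (rule sum.swap)
  also have "\<dots> = (\<Sum>b'\<in>M. \<Sum>a\<in>M. \<Sum>b\<in>M. x b' * (k b' a * h a b * l b))"
    by (rule sum.swap)
  also have "\<dots> = (\<Sum>b'\<in>M. \<Sum>b\<in>M. \<Sum>a\<in>M. x b' * (k b' a * h a b * l b))"
    by (rule sum.cong[OF refl]) (rule sum.swap)
  also have "\<dots> = (\<Sum>b'\<in>M. x b' * (\<Sum>b\<in>M. (\<Sum>a\<in>M. k b' a * h a b) * l b))"
    by (intro sum.cong refl) (simp add: sum_distrib_right sum_distrib_left mult_ac)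
  finally show ?thesis .
qed

theorem lemma3p1:
  fixes P :: "('s \<Rightarrow> real) \<Rightarrow> real"
    and m :: nat and n :: "nat \<Rightarrow> nat"
    and Z R :: "nat \<Rightarrow> nat \<Rightarrow> 'd::finite \<Rightarrow> 's \<Rightarrow> real"
    and mu :: "nat \<Rightarrow> 'd \<Rightarrow> 's \<Rightarrow> real"
    and A :: "nat \<Rightarrow> 'd \<Rightarrow> 'd \<Rightarrow> real"
    and X U :: "'d \<Rightarrow> 's \<Rightarrow> real"
  assumes prev: "prevision P"
    and m_pos: "m \<ge> 1"
    and n_pos: "\<forall>i\<in>{1..m}. n i \<ge> 1"
    and Z_def: "\<forall>i\<in>{1..m}. \<forall>j\<in>{1..n i}. \<forall>c s. Z i j c s = mu i c s + R i j c s"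
    and R_mean: "\<forall>i\<in>{1..m}. \<forall>j\<in>{1..n i}. \<forall>c. P (R i j c) = 0"
    and R_mu: "\<forall>i\<in>{1..m}. \<forall>j\<in>{1..n i}. \<forall>k\<in>{1..m}. \<forall>c c'. cov P (R i j c) (mu k c') = 0"
    and R_R: "\<forall>i\<in>{1..m}. \<forall>j\<in>{1..n i}. \<forall>k\<in>{1..m}. \<forall>l\<in>{1..n k}. (i, j) \<noteq> (k, l) \<longrightarrow>
                (\<forall>c c'. cov P (R i j c) (R k l c') = 0)"
    and R_var: "\<forall>i\<in>{1..m}. \<forall>j\<in>{1..n i}. \<forall>j'\<in>{1..n i}. \<forall>c c'.
                cov P (R i j c) (R i j c') = cov P (R i j' c) (R i j' c')"
    and X_def: "\<forall>c s. X c s = (\<Sum>i\<in>{1..m}. \<Sum>c'\<in>UNIV. A i c c' * mu i c' s) + U c s"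
    and U_mu: "\<forall>k\<in>{1..m}. \<forall>c c'. cov P (U c) (mu k c') = 0"
    and U_R: "\<forall>i\<in>{1..m}. \<forall>j\<in>{1..n i}. \<forall>c c'. cov P (U c) (R i j c') = 0"
  shows
    "let ZI = {(i, j, c). i \<in> {1..m} \<and> j \<in> {1..n i}};
         Zv = (\<lambda>(i, j, c). Z i j c);
         MI = {(i, c). i \<in> {1..m}};
         muv = (\<lambda>(i, c). mu i c);
         PZmu = adj_exp P muv ZI Zv
     in adj_exp P X ZI Zv = adj_exp P X MI PZmu
        \<and> adj_exp P X ZI Zv = (\<lambda>c s. (\<Sum>i\<in>{1..m}. \<Sum>c'\<in>UNIV. A i c c' * PZmu (i, c') s) + P (U c))"
proof -
  define ZI :: "(nat \<times> nat \<times> 'd) set" where "ZI = {(i, j, c). i \<in> {1..m} \<and> j \<in> {1..n i}}"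
  define Zv :: "nat \<times> nat \<times> 'd \<Rightarrow> 's \<Rightarrow> real" where "Zv = (\<lambda>(i, j, c). Z i j c)"
  define MI :: "(nat \<times> 'd) set" where "MI = {(i, c). i \<in> {1..m}}"
  define muv :: "nat \<times> 'd \<Rightarrow> 's \<Rightarrow> real" where "muv = (\<lambda>(i, c). mu i c)"
  define G where "G = mp_inv ZI (\<lambda>j k. cov P (Zv j) (Zv k))"
  define L where "L = Lf P ZI Zv G"
  define PZmu where "PZmu = adj_exp P muv ZI Zv"
  define ell where "ell = (\<lambda>a. L (muv a))"
  have PZ: "PZmu = (\<lambda>a s. P (muv a) + ell a s)" unfolding PZmu_def adj_Lf L_def G_def ell_def ..
  have adjZ: "adj_exp P X ZI Zv = (\<lambda>c s. P (X c) + L (X c) s)" unfolding adj_Lf L_def G_def ..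
  define K where "K = (\<lambda>a b. cov P (PZmu a) (PZmu b))"
  define H where "H = mp_inv MI K"
  have adjM: "adj_exp P X MI PZmu = (\<lambda>c s. P (X c) + Lf P MI PZmu H (X c) s)"
    unfolding adj_Lf H_def K_def ..
  have ZIe: "ZI = (SIGMA i:{1..m}. {1..n i} \<times> UNIV)" unfolding ZI_def by auto
  have finZI: "finite ZI" unfolding ZIe by (intro finite_SigmaI finite_cartesian_product) auto
  have MIe: "MI = {1..m} \<times> UNIV" unfolding MI_def by auto
  have finMI: "finite MI" unfolding MIe by simp
  have c1V: "\<And>i k. i \<in> ZI \<Longrightarrow> k \<in> ZI \<Longrightarrow>
       mat_mult ZI (mat_mult ZI (\<lambda>j k. cov P (Zv j) (Zv k)) G) (\<lambda>j k. cov P (Zv j) (Zv k)) i k = cov P (Zv i) (Zv k)"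
  proof -
    fix i k assume "i \<in> ZI" "k \<in> ZI"
    have symV: "\<And>i k. cov P (Zv i) (Zv k) = cov P (Zv k) (Zv i)" by (rule cov_sym)
    show "?thesis i k" unfolding G_def
      using mp_inv_c1[OF finZI, of "\<lambda>j k. cov P (Zv j) (Zv k)", OF symV \<open>i \<in> ZI\<close> \<open>k \<in> ZI\<close>] by simp
  qed
  have c1K: "\<And>i k. i \<in> MI \<Longrightarrow> k \<in> MI \<Longrightarrow> mat_mult MI (mat_mult MI K H) K i k = K i k"
  proof -
    fix i k assume "i \<in> MI" "k \<in> MI"
    have symK: "\<And>i k. K i k = K k i" unfolding K_def by (rule cov_sym)
    show "?thesis i k" unfolding H_def
      using mp_inv_c1[OF finMI, of K, OF symK \<open>i \<in> MI\<close> \<open>k \<in> MI\<close>] .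
  qed
  have orth: "\<And>Y l. l \<in> ZI \<Longrightarrow> cov P (L Y) (Zv l) = cov P Y (Zv l)"
    unfolding L_def by (rule Lf_orth[OF prev finZI c1V])
  have cov2: "\<And>Y Y'. cov P Y' (L Y) = cov P (L Y') (L Y)"
    unfolding L_def by (rule Lf_cov2[OF prev finZI c1V])
  have UZ: "cov P (U c) (Zv j) = 0" if j: "j \<in> ZI" for c j
  proof -
    obtain i jj c'' where jd: "j = (i, jj, c'')" by (cases j) auto
    have i: "i \<in> {1..m}" and jj: "jj \<in> {1..n i}" using j unfolding jd ZI_def by auto
    have "Zv j = (\<lambda>s. mu i c'' s + R i jj c'' s)" unfolding jd Zv_def using Z_def i jj by auto
    then have "cov P (U c) (Zv j) = cov P (mu i c'') (U c) + cov P (R i jj c'') (U c)"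
      using cov_add_left[OF prev, of "mu i c''" "R i jj c''" "U c"] cov_sym[of P "U c" "Zv j"] by simp
    moreover have "cov P (U c) (mu i c'') = 0" using U_mu i by blast
    moreover have "cov P (U c) (R i jj c'') = 0" using U_R i jj by blast
    ultimately show ?thesis using cov_sym[of P "U c" "mu i c''"] cov_sym[of P "U c" "R i jj c''"] by simp
  qed
  define \<alpha> where "\<alpha> = (\<lambda>c a. A (fst a) c (snd a))"
  have sumconv: "\<And>f :: nat \<Rightarrow> 'd \<Rightarrow> real. (\<Sum>i\<in>{1..m}. \<Sum>c'\<in>UNIV. f i c') = (\<Sum>a\<in>MI. f (fst a) (snd a))"
    unfolding MIe sum.cartesian_product by (simp add: case_prod_beta)
  have Xc: "X c = (\<lambda>s. (\<Sum>a\<in>MI. \<alpha> c a * muv a s) + U c s)" for c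
  proof
    fix s
    show "X c s = (\<Sum>a\<in>MI. \<alpha> c a * muv a s) + U c s"
      using X_def sumconv[of "\<lambda>i c'. A i c c' * mu i c' s"] unfolding \<alpha>_def muv_def
      by (simp add: case_prod_beta)
  qed
  have LX: "L (X c) = (\<lambda>s. \<Sum>a\<in>MI. \<alpha> c a * ell a s)" for c
  proof -
    have "L (X c) = L (\<lambda>s. \<Sum>a\<in>MI. \<alpha> c a * muv a s)"
      unfolding L_def
    proof (rule Lf_cong)
      fix j assume j: "j \<in> ZI"
      show "cov P (X c) (Zv j) = cov P (\<lambda>s. \<Sum>a\<in>MI. \<alpha> c a * muv a s) (Zv j)"
        unfolding Xc cov_add_left[OF prev] using UZ[OF j] by simp
    qed
    also have "\<dots> = (\<lambda>s. \<Sum>a\<in>MI. \<alpha> c a * ell a s)"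
      unfolding L_def ell_def by (rule Lf_lin[OF prev])
    finally show ?thesis .
  qed
  have PX: "P (X c) = (\<Sum>a\<in>MI. \<alpha> c a * P (muv a)) + P (U c)" for c
    unfolding Xc P_add[OF prev] P_sum[OF prev] P_scale[OF prev] ..
  have part2: "adj_exp P X ZI Zv = (\<lambda>c s. (\<Sum>i\<in>{1..m}. \<Sum>c'\<in>UNIV. A i c c' * PZmu (i, c') s) + P (U c))"
  proof (intro ext)
    fix c s
    have "adj_exp P X ZI Zv c s = (\<Sum>a\<in>MI. \<alpha> c a * (P (muv a) + ell a s)) + P (U c)"
      unfolding adjZ PX LX by (simp add: distrib_left sum.distrib)
    also have "\<dots> = (\<Sum>i\<in>{1..m}. \<Sum>c'\<in>UNIV. A i c c' * PZmu (i, c') s) + P (U c)"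
      unfolding sumconv PZ \<alpha>_def by simp
    finally show "adj_exp P X ZI Zv c s = (\<Sum>i\<in>{1..m}. \<Sum>c'\<in>UNIV. A i c c' * PZmu (i, c') s) + P (U c)" .
  qed
  have PPZ: "P (PZmu b) = P (muv b)" for b
    unfolding PZ P_add[OF prev] P_const[OF prev] ell_def L_def Lf_P[OF prev] by simp
  have Kl: "K a b = cov P (ell a) (ell b)" for a b
    unfolding K_def PZ cov_shift_left2[OF prev] cov_shift_right2[OF prev] ..
  have covXa: "cov P (X c) (PZmu a) = (\<Sum>b'\<in>MI. \<alpha> c b' * K b' a)" for c a
  proof -
    have "cov P (X c) (PZmu a) = cov P (X c) (ell a)" unfolding PZ cov_shift_right2[OF prev] ..
    also have "\<dots> = cov P (L (X c)) (ell a)" unfolding ell_def by (rule cov2)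
    also have "\<dots> = (\<Sum>b'\<in>MI. \<alpha> c b' * cov P (ell b') (ell a))" unfolding LX by (rule cov_lincomb_left[OF prev])
    finally show ?thesis unfolding Kl .
  qed
  have KEY: "ell b' s = (\<Sum>b\<in>MI. (\<Sum>a\<in>MI. K b' a * H a b) * ell b s)" if b': "b' \<in> MI" for b' s
  proof -
    define \<beta> where "\<beta> = (\<lambda>b. (if b = b' then 1 else 0) - mat_mult MI K H b' b)"
    define Ys where "Ys = (\<lambda>s. \<Sum>b\<in>MI. \<beta> b * muv b s)"
    define T where "T = L Ys"
    have T_eq: "T = (\<lambda>s. \<Sum>b\<in>MI. \<beta> b * ell b s)" unfolding T_def Ys_def L_def ell_def by (rule Lf_lin[OF prev])
    have delta: "(\<Sum>b\<in>MI. (if b = b' then 1 else 0) * f b) = f b'" for f :: "nat \<times> 'd \<Rightarrow> real"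
      using b' finMI by (simp add: if_distrib[of "\<lambda>x. x * _"] sum.delta cong: if_cong)
    have Tl: "cov P T (ell a) = 0" if a: "a \<in> MI" for a
    proof -
      have "cov P T (ell a) = (\<Sum>b\<in>MI. \<beta> b * K b a)"
        unfolding T_eq cov_lincomb_left[OF prev] Kl ..
      also have "\<dots> = (\<Sum>b\<in>MI. (if b = b' then 1 else 0) * K b a) - (\<Sum>b\<in>MI. mat_mult MI K H b' b * K b a)"
        unfolding \<beta>_def by (simp add: left_diff_distrib sum_subtractf)
      also have "\<dots> = K b' a - mat_mult MI (mat_mult MI K H) K b' a"
        unfolding delta by (simp add: mat_mult_def[of MI "mat_mult MI K H" K])
      also have "\<dots> = 0" using c1K[OF b' a] by simp
      finally show ?thesis .
    qed
    have TT: "cov P T T = 0"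
    proof -
      have e1: "cov P (\<lambda>s. \<Sum>b\<in>MI. \<beta> b * ell b s) T = (\<Sum>b\<in>MI. \<beta> b * cov P (ell b) T)"
        by (rule cov_lincomb_left[OF prev])
      have "cov P T T = (\<Sum>b\<in>MI. \<beta> b * cov P (ell b) T)" using e1 by (simp only: T_eq[symmetric])
      also have "\<dots> = 0" using Tl cov_sym[of P _ T] by (intro sum.neutral) (metis mult_zero_right)
      finally show ?thesis .
    qed
    have Ys0: "cov P Ys (Zv j) = 0" if j: "j \<in> ZI" for j
    proof -
      have "cov P (Zv j) T = 0" by (rule cs_zero[OF prev TT])
      then have "cov P T (Zv j) = 0" using cov_sym[of P T] by metis
      then show ?thesis using orth[OF j, of Ys] unfolding T_def by simp
    qed
    have "L Ys = (\<lambda>s. 0)" unfolding L_def by (rule Lf_zero) (rule Ys0)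
    then have "(\<Sum>b\<in>MI. \<beta> b * ell b s) = 0" using T_eq unfolding T_def by metis
    moreover have "(\<Sum>b\<in>MI. \<beta> b * ell b s) = ell b' s - (\<Sum>b\<in>MI. mat_mult MI K H b' b * ell b s)"
      unfolding \<beta>_def by (simp add: left_diff_distrib sum_subtractf delta)
    ultimately show ?thesis unfolding mat_mult_def by simp
  qed
  have part1: "adj_exp P X ZI Zv = adj_exp P X MI PZmu"
  proof (intro ext)
    fix c s
    have "Lf P MI PZmu H (X c) s = (\<Sum>a\<in>MI. \<Sum>b\<in>MI. (\<Sum>b'\<in>MI. \<alpha> c b' * K b' a) * H a b * ell b s)"
      unfolding Lf_def covXa PPZ by (simp add: PZ)
    also have "\<dots> = (\<Sum>b'\<in>MI. \<alpha> c b' * (\<Sum>b\<in>MI. (\<Sum>a\<in>MI. K b' a * H a b) * ell b s))"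
      by (rule triple)
    also have "\<dots> = (\<Sum>b'\<in>MI. \<alpha> c b' * ell b' s)"
      using KEY by (intro sum.cong refl) simp
    also have "\<dots> = L (X c) s" unfolding LX ..
    finally show "adj_exp P X ZI Zv c s = adj_exp P X MI PZmu c s"
      unfolding adjZ adjM by simp
  qed
  show ?thesis unfolding Let_def
    using part1 part2 unfolding ZI_def Zv_def MI_def muv_def PZmu_def by simp
qed

end
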